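(* Let $\Gamma=(N,A,u)$ be a finite game. Then: (1) Every outcome $\mu\in\Delta A$ that is implementable (by some partially specified data-generating process) is jointly coherent, i.e. $\mathrm{supp}(\mu)\subseteq \mathrm{supp}\,\mathrm{CE}(\Gamma)$. Moreover, if $\mu\in\Delta A$ is jointly coherent, then for every $\epsilon>0$ there exists a partially specified data-generating process that $\epsilon$-implements $\mu$. (2) If $\Gamma$ has rational payoffs (i.e. $u_i(a)\in\mathbb{Q}$ for all $i\in N$, $a\in A$), then an outcome $\mu\in\Delta A$ is implementable if and only if it is jointly coherent.
   Context: A finite game $\Gamma=(N,A,u)$ has a finite set of players $N$, finite action sets $A_i$, $A=\times_{i\in N}A_i$, and utilities $u_i:A\to\mathbb{R}$ (extended multilinearly to mixed action profiles). A correlated equilibrium is $p\in\Delta A$ such that for all $i\in N$, all $a_i$ with $p_{a_i}=\sum_{a_{-i}}p_{a_i,a_{-i}}>0$, and all $b\in A_i$: $\sum_{a_{-i}}p_{a_i,a_{-i}}[u_i(a_i,a_{-i})-u_i(b,a_{-i})]\ge 0$. $\mathrm{CE}(\Gamma)$ denotes the set of correlated equilibria and $\mathrm{supp}\,\mathrm{CE}(\Gamma)=\bigcup_{p\in\mathrm{CE}(\Gamma)}\mathrm{supp}(p)$. An outcome $\mu\in\Delta A$ is jointly coherent if $\mathrm{supp}(\mu)\subseteq\mathrm{supp}\,\mathrm{CE}(\Gamma)$. A partially specified data-generating process is a triple $\mathcal{D}=(M,\eta,\mathcal{F})$ where $M=\times_{i\in N}M_i$ is a finite set of message profiles ($M_i$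 the messages of player $i$), $\eta\in\Delta M$, and $\mathcal{F}\subseteq\{f:M\to\mathbb{R}\}$. Let $\Delta_{\mathcal{D}}=\{q\in\Delta M:\sum_m q_mf(m)=\sum_m\eta_mf(m)\ \forall f\in\mathcal{F}\}$; the players' belief is the unique maximizer $q$ of the Shannon entropy $\mathcal{H}(q)=-\sum_m q_m\log q_m$ (with $0\log 0=0$) over $\Delta_{\mathcal{D}}$. A strategy profile is $\sigma=(\sigma_i)_{i\in N}$ with $\sigma_i:M_i\to\Delta A_i$, and $\sigma(a\mid m)=\prod_i\sigma_i(a_i\mid m_i)$; the outcome is $\eta\circ\sigma\in\Delta A$, $(\eta\circ\sigma)(a)=\sum_m\eta_m\sigma(a\mid m)$. An outcome $\mu$ is implemented by $\mathcal{D}$ if there is $\sigma$ such that (i) $q$ is the maximum-entropy belief over $\Delta_{\mathcal{D}}$; (ii) for all $i\in N$, all $m_i\in M_i$ with $q$-marginal positive, and all $a_i'\in A_i$: $\sum_{m_{-i}}q_{m_i,m_{-i}}[u_i(\sigma_i(m_i),\sigma_{-i}(m_{-i}))-u_i(a_i',\sigma_{-i}(m_{-i}))]\ge 0$; (iii) $\mu=\eta\circ\sigma$. It is $\epsilon$-implemented if (ii) is replaced by the same inequality with right-hand side $-\epsilon$. An outcome is implementable if some partially specified data-generating process implements it. *)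

theory Defs
  imports Complex_Main
begin

(* A finite game: players are the elements of a finite type 'n;
   A :: 'n => 'a set gives the action set of each player;
   u :: 'n => ('n => 'a) => real gives the utilities on pure action profiles. *)

definition profiles :: "('n \<Rightarrow> 'x set) \<Rightarrow> ('n \<Rightarrow> 'x) set" where
  "profiles S = {s. \<forall>i. s i \<in> S i}"

definition is_dist :: "'x set \<Rightarrow> ('x \<Rightarrow> real) \<Rightarrow> bool" where
  "is_dist S p \<longleftrightarrow> (\<forall>x. 0 \<le> p x) \<and> (\<forall>x. x \<notin> S \<longrightarrow> p x = 0) \<and> sum p S = 1"

definition mixed_util ::
  "('n::finite \<Rightarrow> 'a set) \<Rightarrow> ('n \<Rightarrow> ('n \<Rightarrow> 'a) \<Rightarrow> real) \<Rightarrow> 'n \<Rightarrow> ('n \<Rightarrow> 'a \<Rightarrow> real) \<Rightarrow> real" where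
  "mixed_util A u i x = (\<Sum>a\<in>profiles A. (\<Prod>j\<in>UNIV. x j (a j)) * u i a)"

definition pure :: "'a \<Rightarrow> 'a \<Rightarrow> real" where
  "pure b = (\<lambda>c. if c = b then 1 else 0)"

definition correlated_eq ::
  "('n::finite \<Rightarrow> 'a set) \<Rightarrow> ('n \<Rightarrow> ('n \<Rightarrow> 'a) \<Rightarrow> real) \<Rightarrow> (('n \<Rightarrow> 'a) \<Rightarrow> real) \<Rightarrow> bool" where
  "correlated_eq A u p \<longleftrightarrow> is_dist (profiles A) p \<and>
     (\<forall>i. \<forall>ai\<in>A i. (\<Sum>a\<in>{a\<in>profiles A. a i = ai}. p a) > 0 \<longrightarrow>
        (\<forall>b\<in>A i. (\<Sum>a\<in>{a\<in>profiles A. a i = ai}. p a * (u i a - u i (a(i := b)))) \<ge> 0))"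

definition supp_CE ::
  "('n::finite \<Rightarrow> 'a set) \<Rightarrow> ('n \<Rightarrow> ('n \<Rightarrow> 'a) \<Rightarrow> real) \<Rightarrow> ('n \<Rightarrow> 'a) set" where
  "supp_CE A u = (\<Union>p\<in>{p. correlated_eq A u p}. {a. p a \<noteq> 0})"

definition jointly_coherent ::
  "('n::finite \<Rightarrow> 'a set) \<Rightarrow> ('n \<Rightarrow> ('n \<Rightarrow> 'a) \<Rightarrow> real) \<Rightarrow> (('n \<Rightarrow> 'a) \<Rightarrow> real) \<Rightarrow> bool" where
  "jointly_coherent A u \<mu> \<longleftrightarrow> is_dist (profiles A) \<mu> \<and> {a. \<mu> a \<noteq> 0} \<subseteq> supp_CE A u"

(* partially specified data-generating processes (M, eta, F); messages are natural numbers *)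
definition Delta_D ::
  "('n::finite \<Rightarrow> nat set) \<Rightarrow> (('n \<Rightarrow> nat) \<Rightarrow> real) \<Rightarrow> (('n \<Rightarrow> nat) \<Rightarrow> real) set \<Rightarrow> (('n \<Rightarrow> nat) \<Rightarrow> real) set" where
  "Delta_D M \<eta> F = {q. is_dist (profiles M) q \<and>
      (\<forall>f\<in>F. (\<Sum>m\<in>profiles M. q m * f m) = (\<Sum>m\<in>profiles M. \<eta> m * f m))}"

definition entropy :: "'x set \<Rightarrow> ('x \<Rightarrow> real) \<Rightarrow> real" where
  "entropy S q = - (\<Sum>m\<in>S. if q m = 0 then 0 else q m * ln (q m))"

definition maxent_belief ::
  "('n::finite \<Rightarrow> nat set) \<Rightarrow> (('n \<Rightarrow> nat) \<Rightarrow> real) \<Rightarrow> (('n \<Rightarrow> nat) \<Rightarrow> real) set \<Rightarrow> (('n \<Rightarrow> nat) \<Rightarrow> real) \<Rightarrow> bool" where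
  "maxent_belief M \<eta> F q \<longleftrightarrow> q \<in> Delta_D M \<eta> F \<and>
     (\<forall>q'\<in>Delta_D M \<eta> F. entropy (profiles M) q' \<le> entropy (profiles M) q) \<and>
     (\<forall>q'\<in>Delta_D M \<eta> F. entropy (profiles M) q' = entropy (profiles M) q \<longrightarrow> q' = q)"

definition valid_DGP :: "('n::finite \<Rightarrow> nat set) \<Rightarrow> (('n \<Rightarrow> nat) \<Rightarrow> real) \<Rightarrow> bool" where
  "valid_DGP M \<eta> \<longleftrightarrow> (\<forall>i. finite (M i)) \<and> is_dist (profiles M) \<eta>"

definition valid_strategy ::
  "('n \<Rightarrow> 'a set) \<Rightarrow> ('n \<Rightarrow> nat set) \<Rightarrow> ('n \<Rightarrow> nat \<Rightarrow> 'a \<Rightarrow> real) \<Rightarrow> bool" where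
  "valid_strategy A M \<sigma> \<longleftrightarrow> (\<forall>i. \<forall>mi\<in>M i. is_dist (A i) (\<sigma> i mi))"

definition outcome ::
  "('n::finite \<Rightarrow> nat set) \<Rightarrow> (('n \<Rightarrow> nat) \<Rightarrow> real) \<Rightarrow> ('n \<Rightarrow> nat \<Rightarrow> 'a \<Rightarrow> real) \<Rightarrow> ('n \<Rightarrow> 'a) \<Rightarrow> real" where
  "outcome M \<eta> \<sigma> a = (\<Sum>m\<in>profiles M. \<eta> m * (\<Prod>j\<in>UNIV. \<sigma> j (m j) (a j)))"

(* condition (ii) with right-hand side -eps (eps = 0 gives exact implementation) *)
definition eps_optimal ::
  "('n::finite \<Rightarrow> 'a set) \<Rightarrow> ('n \<Rightarrow> ('n \<Rightarrow> 'a) \<Rightarrow> real) \<Rightarrow> ('n \<Rightarrow> nat set) \<Rightarrow>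
   (('n \<Rightarrow> nat) \<Rightarrow> real) \<Rightarrow> ('n \<Rightarrow> nat \<Rightarrow> 'a \<Rightarrow> real) \<Rightarrow> real \<Rightarrow> bool" where
  "eps_optimal A u M q \<sigma> \<epsilon> \<longleftrightarrow>
     (\<forall>i. \<forall>mi\<in>M i. (\<Sum>m\<in>{m\<in>profiles M. m i = mi}. q m) > 0 \<longrightarrow>
        (\<forall>b\<in>A i. (\<Sum>m\<in>{m\<in>profiles M. m i = mi}.
            q m * (mixed_util A u i (\<lambda>j. \<sigma> j (m j))
                   - mixed_util A u i ((\<lambda>j. \<sigma> j (m j))(i := pure b)))) \<ge> - \<epsilon>))"

definition eps_implements ::
  "('n::finite \<Rightarrow> 'a set) \<Rightarrow> ('n \<Rightarrow> ('n \<Rightarrow> 'a) \<Rightarrow> real) \<Rightarrow> ('n \<Rightarrow> nat set) \<Rightarrow>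
   (('n \<Rightarrow> nat) \<Rightarrow> real) \<Rightarrow> (('n \<Rightarrow> nat) \<Rightarrow> real) set \<Rightarrow> real \<Rightarrow> (('n \<Rightarrow> 'a) \<Rightarrow> real) \<Rightarrow> bool" where
  "eps_implements A u M \<eta> F \<epsilon> \<mu> \<longleftrightarrow> valid_DGP M \<eta> \<and>
     (\<exists>\<sigma> q. maxent_belief M \<eta> F q \<and> valid_strategy A M \<sigma> \<and>
            eps_optimal A u M q \<sigma> \<epsilon> \<and> (\<forall>a\<in>profiles A. \<mu> a = outcome M \<eta> \<sigma> a))"

abbreviation implements where
  "implements A u M \<eta> F \<mu> \<equiv> eps_implements A u M \<eta> F 0 \<mu>"

definition implementable ::
  "('n::finite \<Rightarrow> 'a set) \<Rightarrow> ('n \<Rightarrow> ('n \<Rightarrow> 'a) \<Rightarrow> real) \<Rightarrow> (('n \<Rightarrow> 'a) \<Rightarrow> real) \<Rightarrow> bool" where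
  "implementable A u \<mu> \<longleftrightarrow> (\<exists>M \<eta> F. implements A u M \<eta> F \<mu>)"

end

theory Submission
  imports Defs "HOL-Library.FuncSet" "HOL-Library.Countable_Set"
begin

lemma profiles_eq: "profiles A = Pi UNIV A"
  by (auto simp: profiles_def Pi_def)

lemma finite_profiles:
  fixes A :: "'n::finite \<Rightarrow> 'x set"
  assumes "\<And>i. finite (A i)"
  shows "finite (profiles A)"
  using finite_PiE[of UNIV A] assms by (simp add: profiles_eq PiE_UNIV_domain)

lemma sum_prod_profiles:
  fixes A :: "'n::finite \<Rightarrow> 'x set" and f :: "'n \<Rightarrow> 'x \<Rightarrow> real"
  assumes "\<And>i. finite (A i)"
  shows "(\<Sum>a\<in>profiles A. \<Prod>j\<in>UNIV. f j (a j)) = (\<Prod>j\<in>UNIV. \<Sum>x\<in>A j. f j x)"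
  using prod_sum_PiE[of UNIV A f] assms by (simp add: profiles_eq PiE_UNIV_domain)

definition xlnx :: "real \<Rightarrow> real" where
  "xlnx x = (if x = 0 then 0 else x * ln x)"

lemma tangent:
  fixes x z :: real
  assumes "0 \<le> x" "0 < z"
  shows "x * ln z + x - z \<le> xlnx x"
proof (cases "x = 0")
  case True then show ?thesis using assms by (simp add: xlnx_def)
next
  case False
  then have x: "x > 0" using assms by simp
  have "ln (z / x) \<le> z / x - 1" using ln_le_minus_one x assms by simp
  then have "ln z - ln x \<le> z / x - 1" using x assms by (simp add: ln_div)
  then have "x * (ln z - ln x) \<le> x * (z / x - 1)" using x by (simp add: mult_left_mono)
  then show ?thesis using x False by (simp add: xlnx_def algebra_simps)
qed

lemma tangent_eq:
  fixes x z :: real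
  assumes "0 < x" "0 < z" "xlnx x = x * ln z + x - z"
  shows "x = z"
proof -
  have "x * (ln z - ln x) = x * (z / x - 1)" using assms by (simp add: xlnx_def algebra_simps)
  then have "ln z - ln x = z / x - 1" using assms by simp
  then have "ln (z / x) = z / x - 1" using assms by (simp add: ln_div)
  then have "z / x = 1" using ln_eq_minus_one[of "z / x"] assms by simp
  then show ?thesis using assms by simp
qed

lemma xlnx_convex:
  fixes x y t :: real
  assumes "0 \<le> x" "0 \<le> y" "0 \<le> t" "t \<le> 1"
  shows "xlnx ((1 - t) * x + t * y) \<le> (1 - t) * xlnx x + t * xlnx y"
proof (cases "(1 - t) * x + t * y = 0")
  case True
  then have a: "(1 - t) * x = 0" "t * y = 0" using assms
    by (smt (verit) mult_nonneg_nonneg)+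
  have "(1 - t) * xlnx x = 0" using a by (auto simp: xlnx_def)
  moreover have "t * xlnx y = 0" using a by (auto simp: xlnx_def)
  moreover have "xlnx ((1 - t) * x + t * y) = 0" using True by (simp add: xlnx_def)
  ultimately show ?thesis by linarith
next
  case False
  let ?z = "(1 - t) * x + t * y"
  have z: "?z > 0" using False assms by (smt (verit) mult_nonneg_nonneg)
  have "(1 - t) * (x * ln ?z + x - ?z) \<le> (1 - t) * xlnx x"
    using tangent[OF assms(1) z] assms by (intro mult_left_mono) auto
  moreover have "t * (y * ln ?z + y - ?z) \<le> t * xlnx y"
    using tangent[OF assms(2) z] assms by (intro mult_left_mono) auto
  ultimately have "(1 - t) * (x * ln ?z + x - ?z) + t * (y * ln ?z + y - ?z) \<le> (1 - t) * xlnx x + t * xlnx y"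
    by simp
  moreover have "(1 - t) * (x * ln ?z + x - ?z) + t * (y * ln ?z + y - ?z) = ?z * ln ?z"
    by (simp add: algebra_simps)
  ultimately show ?thesis using False by (simp add: xlnx_def)
qed

lemma entropy_xlnx: "entropy S q = - (\<Sum>m\<in>S. xlnx (q m))"
  by (simp add: entropy_def xlnx_def)

lemma gibbs:
  assumes S: "finite S" and q: "is_dist S q" and q': "is_dist S q'"
    and sub: "\<forall>m\<in>S. q m = 0 \<longrightarrow> q' m = 0"
    and g: "g = (\<lambda>m. if q m = 0 then 0 else ln (q m))"
    and eq: "(\<Sum>m\<in>S. q' m * g m) = (\<Sum>m\<in>S. q m * g m)"
  shows "entropy S q' \<le> entropy S q \<and> (entropy S q' = entropy S q \<longrightarrow> q' = q)"
proof -
  define T where "T m = xlnx (q' m) - q' m * g m" for m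
  have qg: "q m * g m = xlnx (q m)" for m by (simp add: g xlnx_def)
  have diff: "entropy S q - entropy S q' = (\<Sum>m\<in>S. T m)"
    unfolding entropy_xlnx T_def sum_subtractf using eq qg by simp
  have Tb: "T m \<ge> q' m - q m" if m: "m \<in> S" for m
  proof (cases "q m = 0")
    case True then show ?thesis using sub m by (simp add: T_def xlnx_def)
  next
    case False
    then have "q m > 0" using q unfolding is_dist_def by (metis order_le_neq_trans)
    then show ?thesis using tangent[of "q' m" "q m"] q' False unfolding T_def g is_dist_def by auto
  qed
  have sums: "(\<Sum>m\<in>S. q' m - q m) = 0" using q q' by (simp add: is_dist_def sum_subtractf)
  have "(\<Sum>m\<in>S. T m - (q' m - q m)) = (\<Sum>m\<in>S. T m)" using sums by (simp add: sum_subtractf)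
  have ge: "(\<Sum>m\<in>S. T m) \<ge> 0"
    using sum_mono[of S "\<lambda>m. q' m - q m" T] Tb sums by simp
  have uniq: "q' = q" if e: "entropy S q' = entropy S q"
  proof
    fix m
    show "q' m = q m"
    proof (cases "m \<in> S")
      case False then show ?thesis using q q' by (simp add: is_dist_def)
    next
      case True
      have "(\<Sum>m\<in>S. T m - (q' m - q m)) = 0" using e diff sums by (simp add: sum_subtractf)
      then have z: "T m - (q' m - q m) = 0"
        using sum_nonneg_eq_0_iff[OF S, of "\<lambda>m. T m - (q' m - q m)"] Tb True by auto
      show ?thesis
      proof (cases "q m = 0")
        case True then show ?thesis using sub \<open>m \<in> S\<close> by simp
      next
        case False
        then have qp: "q m > 0" using q unfolding is_dist_def by (metis order_le_neq_trans)
        show ?thesis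
        proof (cases "q' m = 0")
          case True
          then show ?thesis using z False by (simp add: T_def xlnx_def)
        next
          case False
          then have "q' m > 0" using q' unfolding is_dist_def by (metis order_le_neq_trans)
          then show ?thesis using tangent_eq[of "q' m" "q m"] qp z \<open>q m \<noteq> 0\<close>
            by (simp add: T_def g)
        qed
      qed
    qed
  qed
  show ?thesis using ge diff uniq by simp
qed


lemma prod_split_pure:
  fixes s :: "'n::finite \<Rightarrow> 'a \<Rightarrow> real"
  shows "(\<Prod>j\<in>UNIV. s j (a j)) = s i (a i) * (\<Prod>j\<in>UNIV. (s(i := pure (a i))) j (a j))"
proof -
  have "(\<Prod>j\<in>UNIV. s j (a j)) = s i (a i) * (\<Prod>j\<in>UNIV-{i}. s j (a j))"
    by (simp add: prod.remove)
  moreover have "(\<Prod>j\<in>UNIV. (s(i := pure (a i))) j (a j)) = (\<Prod>j\<in>UNIV-{i}. s j (a j))"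
    by (subst prod.remove[of UNIV i]) (auto simp: pure_def intro!: prod.cong)
  ultimately show ?thesis by simp
qed

lemma sum_fiber_pure:
  fixes s :: "'n::finite \<Rightarrow> 'a \<Rightarrow> real"
  shows "(\<Sum>a\<in>{a\<in>profiles A. a i = c}. (\<Prod>j\<in>UNIV. s j (a j)) * G a)
       = s i c * (\<Sum>a\<in>{a\<in>profiles A. a i = c}. (\<Prod>j\<in>UNIV. (s(i := pure c)) j (a j)) * G a)"
  unfolding sum_distrib_left
  by (rule sum.cong) (auto simp: prod_split_pure[of s _ i])

lemma sum_pure_restrict:
  fixes s :: "'n::finite \<Rightarrow> 'a \<Rightarrow> real"
  assumes fin: "\<And>i. finite (A i)"
  shows "(\<Sum>a\<in>profiles A. (\<Prod>j\<in>UNIV. (s(i := pure c)) j (a j)) * G a)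
       = (\<Sum>a\<in>{a\<in>profiles A. a i = c}. (\<Prod>j\<in>UNIV. (s(i := pure c)) j (a j)) * G a)"
proof (rule sum.mono_neutral_right)
  show "finite (profiles A)" using finite_profiles[OF fin] .
  show "{a \<in> profiles A. a i = c} \<subseteq> profiles A" by auto
  show "\<forall>a\<in>profiles A - {a \<in> profiles A. a i = c}. (\<Prod>j\<in>UNIV. (s(i := pure c)) j (a j)) * G a = 0"
  proof
    fix a assume "a \<in> profiles A - {a \<in> profiles A. a i = c}"
    then have "a i \<noteq> c" by auto
    then have "(\<Prod>j\<in>UNIV. (s(i := pure c)) j (a j)) = 0"
      by (intro prod_zero) (auto simp: pure_def intro!: bexI[of _ i])
    then show "(\<Prod>j\<in>UNIV. (s(i := pure c)) j (a j)) * G a = 0" by simp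
  qed
qed

lemma sum_fiber_shift:
  fixes s :: "'n::finite \<Rightarrow> 'a \<Rightarrow> real"
  assumes "b \<in> A i" "c \<in> A i"
  shows "(\<Sum>a\<in>{a\<in>profiles A. a i = c}. (\<Prod>j\<in>UNIV. (s(i := pure c)) j (a j)) * G (a(i := b)))
       = (\<Sum>a\<in>{a\<in>profiles A. a i = b}. (\<Prod>j\<in>UNIV. (s(i := pure b)) j (a j)) * G a)"
  by (rule sum.reindex_bij_witness[where i="\<lambda>a. a(i:=c)" and j="\<lambda>a. a(i:=b)"])
     (use assms in \<open>auto simp: profiles_def pure_def intro!: prod.cong\<close>)

lemma mixed_util_fiber:
  fixes s :: "'n::finite \<Rightarrow> 'a \<Rightarrow> real"
  assumes fin: "\<And>i. finite (A i)"
  shows "mixed_util A u i (s(i := pure c))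
       = (\<Sum>a\<in>{a\<in>profiles A. a i = c}. (\<Prod>j\<in>UNIV. (s(i := pure c)) j (a j)) * u i a)"
  unfolding mixed_util_def using sum_pure_restrict[OF fin] .

lemma mixed_util_decomp:
  fixes s :: "'n::finite \<Rightarrow> 'a \<Rightarrow> real"
  assumes fin: "\<And>i. finite (A i)"
  shows "mixed_util A u i s = (\<Sum>c\<in>A i. s i c * mixed_util A u i (s(i := pure c)))"
proof -
  have "mixed_util A u i s = (\<Sum>c\<in>A i. \<Sum>a\<in>{a\<in>profiles A. a i = c}. (\<Prod>j\<in>UNIV. s j (a j)) * u i a)"
    unfolding mixed_util_def
    by (rule sum.group[symmetric]) (use fin finite_profiles[OF fin] in \<open>auto simp: profiles_def\<close>)
  also have "\<dots> = (\<Sum>c\<in>A i. s i c * mixed_util A u i (s(i := pure c)))"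
    by (rule sum.cong) (simp_all add: sum_fiber_pure mixed_util_fiber[OF fin])
  finally show ?thesis .
qed

lemma avg_max:
  fixes \<sigma> V :: "'a \<Rightarrow> real"
  assumes C: "finite C" and nn: "\<forall>c\<in>C. \<sigma> c \<ge> 0" and s1: "sum \<sigma> C = 1"
    and ge: "\<forall>b\<in>C. (\<Sum>c\<in>C. \<sigma> c * V c) \<ge> V b" and a: "a \<in> C" and b: "b \<in> C"
  shows "\<sigma> a * (V a - V b) \<ge> 0"
proof -
  let ?S = "\<Sum>c\<in>C. \<sigma> c * V c"
  have "(\<Sum>c\<in>C. \<sigma> c * (?S - V c)) = (\<Sum>c\<in>C. \<sigma> c) * ?S - ?S"
    by (simp add: right_diff_distrib sum_subtractf sum_distrib_right)
  then have z: "(\<Sum>c\<in>C. \<sigma> c * (?S - V c)) = 0" using s1 by simp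
  have "\<forall>c\<in>C. \<sigma> c * (?S - V c) = 0"
    using sum_nonneg_eq_0_iff[OF C, of "\<lambda>c. \<sigma> c * (?S - V c)"] z nn ge by auto
  then have "\<sigma> a * (?S - V a) = 0" using a by auto
  then have "\<sigma> a = 0 \<or> V a = ?S" by auto
  then show ?thesis using ge b nn a by auto
qed

lemma outcome_nonneg:
  assumes q: "is_dist (profiles M) q" and \<sigma>: "valid_strategy A M \<sigma>"
  shows "outcome M q \<sigma> a \<ge> 0"
  unfolding outcome_def
  using q \<sigma> by (auto simp: is_dist_def valid_strategy_def profiles_def
      intro!: sum_nonneg mult_nonneg_nonneg prod_nonneg)

lemma ce_of_opt:
  fixes A :: "'n::finite \<Rightarrow> 'a set"
  assumes fin: "\<And>i. finite (A i)" and finM: "\<And>i. finite (M i)"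
    and q: "is_dist (profiles M) q"
    and \<sigma>: "valid_strategy A M \<sigma>"
    and opt: "eps_optimal A u M q \<sigma> 0"
  shows "correlated_eq A u (outcome M q \<sigma>)"
proof -
  have fPM: "finite (profiles M)" using finite_profiles[OF finM] .
  have fPA: "finite (profiles A)" using finite_profiles[OF fin] .
  have \<sigma>d: "is_dist (A j) (\<sigma> j (m j))" if "m \<in> profiles M" for m j
    using \<sigma> that by (auto simp: valid_strategy_def profiles_def)
  have qnn: "q m \<ge> 0" for m using q by (simp add: is_dist_def)
  have dist: "is_dist (profiles A) (outcome M q \<sigma>)"
  proof -
    have "outcome M q \<sigma> a = 0" if "a \<notin> profiles A" for a
    proof -
      obtain j where j: "a j \<notin> A j" using \<open>a \<notin> profiles A\<close> by (auto simp: profiles_def)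
      show ?thesis unfolding outcome_def
      proof (rule sum.neutral, rule ballI)
        fix m assume "m \<in> profiles M"
        then have "\<sigma> j (m j) (a j) = 0" using \<sigma>d j by (simp add: is_dist_def)
        then have "(\<Prod>j\<in>UNIV. \<sigma> j (m j) (a j)) = 0" by (intro prod_zero) auto
        then show "q m * (\<Prod>j\<in>UNIV. \<sigma> j (m j) (a j)) = 0" by simp
      qed
    qed
    moreover have "sum (outcome M q \<sigma>) (profiles A) = 1"
    proof -
      have "sum (outcome M q \<sigma>) (profiles A)
          = (\<Sum>m\<in>profiles M. q m * (\<Sum>a\<in>profiles A. \<Prod>j\<in>UNIV. \<sigma> j (m j) (a j)))"
        unfolding outcome_def sum_distrib_left by (rule sum.swap)
      also have "\<dots> = (\<Sum>m\<in>profiles M. q m)"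
      proof (rule sum.cong)
        fix m assume "m \<in> profiles M"
        then show "q m * (\<Sum>a\<in>profiles A. \<Prod>j\<in>UNIV. \<sigma> j (m j) (a j)) = q m"
          using sum_prod_profiles[OF fin, of "\<lambda>j. \<sigma> j (m j)"] \<sigma>d[unfolded is_dist_def] by simp
      qed simp
      finally show ?thesis using q by (simp add: is_dist_def)
    qed
    ultimately show ?thesis using outcome_nonneg[OF q \<sigma>] by (auto simp: is_dist_def)
  qed
  have obed: "(\<Sum>a\<in>{a\<in>profiles A. a i = ai}. outcome M q \<sigma> a * (u i a - u i (a(i := b)))) \<ge> 0"
    if ai: "ai \<in> A i" and b: "b \<in> A i" for i ai b
  proof -
    define s where "s m = (\<lambda>j. \<sigma> j (m j))" for m :: "'n \<Rightarrow> nat"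
    define W where "W m c = mixed_util A u i ((s m)(i := pure c))" for m c
    have inner: "(\<Sum>a\<in>{a\<in>profiles A. a i = ai}. (\<Prod>j\<in>UNIV. s m j (a j)) * (u i a - u i (a(i := b))))
        = \<sigma> i (m i) ai * (W m ai - W m b)" for m
    proof -
      have "(\<Sum>a\<in>{a\<in>profiles A. a i = ai}. (\<Prod>j\<in>UNIV. s m j (a j)) * (u i a - u i (a(i := b))))
        = s m i ai * ((\<Sum>a\<in>{a\<in>profiles A. a i = ai}. (\<Prod>j\<in>UNIV. ((s m)(i := pure ai)) j (a j)) * u i a)
          - (\<Sum>a\<in>{a\<in>profiles A. a i = ai}. (\<Prod>j\<in>UNIV. ((s m)(i := pure ai)) j (a j)) * u i (a(i := b))))"
        unfolding sum_fiber_pure[where s="s m" and A=A and i=i and c=ai] by (simp add: algebra_simps sum_subtractf)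
      also have "\<dots> = \<sigma> i (m i) ai * (W m ai - W m b)"
        unfolding sum_fiber_shift[where A=A and i=i and b=b and c=ai and s="s m" and G="u i", OF b ai] W_def mixed_util_fiber[OF fin]
        by (simp add: s_def)
      finally show ?thesis .
    qed
    have "(\<Sum>a\<in>{a\<in>profiles A. a i = ai}. outcome M q \<sigma> a * (u i a - u i (a(i := b))))
        = (\<Sum>m\<in>profiles M. q m * (\<Sum>a\<in>{a\<in>profiles A. a i = ai}. (\<Prod>j\<in>UNIV. s m j (a j)) * (u i a - u i (a(i := b)))))"
      unfolding outcome_def sum_distrib_right sum_distrib_left
      by (subst sum.swap) (simp add: s_def mult.assoc)
    also have "\<dots> = (\<Sum>m\<in>profiles M. q m * (\<sigma> i (m i) ai * (W m ai - W m b)))"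
      using inner by simp
    also have "\<dots> = (\<Sum>mi\<in>M i. \<Sum>m\<in>{m\<in>profiles M. m i = mi}. q m * (\<sigma> i (m i) ai * (W m ai - W m b)))"
      by (rule sum.group[symmetric]) (use fPM finM in \<open>auto simp: profiles_def\<close>)
    also have "\<dots> = (\<Sum>mi\<in>M i. \<sigma> i mi ai * ((\<Sum>m\<in>{m\<in>profiles M. m i = mi}. q m * W m ai)
                        - (\<Sum>m\<in>{m\<in>profiles M. m i = mi}. q m * W m b)))"
      by (rule sum.cong) (auto simp: sum_distrib_left sum_subtractf algebra_simps intro!: sum.cong)
    also have "\<dots> \<ge> 0"
    proof (rule sum_nonneg)
      fix mi assume mi: "mi \<in> M i"
      define Fb where "Fb = {m\<in>profiles M. m i = mi}"
      define V where "V c = (\<Sum>m\<in>Fb. q m * W m c)" for c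
      have fFb: "finite Fb" using fPM by (simp add: Fb_def)
      have dmi: "is_dist (A i) (\<sigma> i mi)" using \<sigma> mi by (simp add: valid_strategy_def)
      show "\<sigma> i mi ai * (V ai - V b) \<ge> 0" unfolding V_def[symmetric] Fb_def[symmetric]
      proof (cases "(\<Sum>m\<in>Fb. q m) > 0")
        case False
        moreover have "(\<Sum>m\<in>Fb. q m) \<ge> 0" using qnn by (simp add: sum_nonneg)
        ultimately have "(\<Sum>m\<in>Fb. q m) = 0" by linarith
        then have "\<forall>m\<in>Fb. q m = 0" using sum_nonneg_eq_0_iff[OF fFb] qnn by auto
        then show ?thesis by (simp add: V_def)
      next
        case True
        have mu: "mixed_util A u i (s m) = (\<Sum>c\<in>A i. \<sigma> i mi c * W m c)" if "m \<in> Fb" for m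
          using that mixed_util_decomp[OF fin, where u=u and i=i and s="s m"] by (simp add: W_def s_def Fb_def)
        have "\<forall>b'\<in>A i. (\<Sum>c\<in>A i. \<sigma> i mi c * V c) \<ge> V b'"
        proof
          fix b' assume b': "b' \<in> A i"
          have "(\<Sum>m\<in>Fb. q m * (mixed_util A u i (s m) - W m b')) \<ge> 0"
            using opt mi True b' unfolding eps_optimal_def Fb_def W_def s_def by auto
          also have "(\<Sum>m\<in>Fb. q m * (mixed_util A u i (s m) - W m b'))
              = (\<Sum>c\<in>A i. \<sigma> i mi c * V c) - V b'"
            unfolding V_def using mu
            by (simp add: algebra_simps sum_subtractf sum_distrib_left sum_distrib_right cong: sum.cong)
              (subst sum.swap, simp add: algebra_simps)
          finally show "(\<Sum>c\<in>A i. \<sigma> i mi c * V c) \<ge> V b'" by simp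
        qed
        then show ?thesis
          using avg_max[where C="A i" and \<sigma>="\<sigma> i mi" and V=V and a=ai and b=b] fin dmi ai b by (auto simp: is_dist_def)
      qed
    qed
    finally show ?thesis .
  qed
  show ?thesis unfolding correlated_eq_def using dist obed by auto
qed


lemma maxent_supp:
  assumes finM: "\<And>i. finite (M i)" and me: "maxent_belief M \<eta> F q"
    and eta: "is_dist (profiles M) \<eta>" and pos: "\<eta> m0 > 0"
  shows "q m0 > 0"
proof (rule ccontr)
  assume nq: "\<not> q m0 > 0"
  let ?S = "profiles M"
  have fS: "finite ?S" using finite_profiles[OF finM] .
  have qD: "q \<in> Delta_D M \<eta> F" using me by (simp add: maxent_belief_def)
  then have q: "is_dist ?S q" by (simp add: Delta_D_def)
  have q0: "q m0 = 0" using nq q by (simp add: is_dist_def) (metis order_le_neq_trans)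
  have m0: "m0 \<in> ?S" using eta pos by (auto simp: is_dist_def)
  define E where "E p = (\<Sum>m\<in>?S. xlnx (p m))" for p
  define c where "c = (E q - E \<eta>) / \<eta> m0"
  define t where "t = min (1/2) (exp (c - 1))"
  have t0: "t > 0" and t1: "t \<le> 1/2" by (auto simp: t_def)
  have lnt: "ln t \<le> c - 1"
  proof -
    have "ln t \<le> ln (exp (c - 1))" using t0 by (subst ln_le_cancel_iff) (auto simp: t_def)
    then show ?thesis by simp
  qed
  define qt where "qt m = (1 - t) * q m + t * \<eta> m" for m
  have qtD: "qt \<in> Delta_D M \<eta> F"
  proof -
    have "is_dist ?S qt"
      using q eta t0 t1 unfolding is_dist_def qt_def
      by (auto simp: sum.distrib sum_distrib_left[symmetric] intro!: add_nonneg_nonneg mult_nonneg_nonneg)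
    moreover have "(\<Sum>m\<in>?S. qt m * f m) = (\<Sum>m\<in>?S. \<eta> m * f m)" if "f \<in> F" for f
    proof -
      have "(\<Sum>m\<in>?S. qt m * f m) = (1 - t) * (\<Sum>m\<in>?S. q m * f m) + t * (\<Sum>m\<in>?S. \<eta> m * f m)"
        by (simp add: qt_def distrib_right sum.distrib sum_distrib_left mult.assoc)
      also have "\<dots> = (\<Sum>m\<in>?S. \<eta> m * f m)" using qD that by (simp add: Delta_D_def algebra_simps)
      finally show ?thesis .
    qed
    ultimately show ?thesis by (simp add: Delta_D_def)
  qed
  then have "entropy ?S qt \<le> entropy ?S q" using me by (simp add: maxent_belief_def)
  then have Eq: "E q \<le> E qt" by (simp add: entropy_xlnx E_def)
  have trm: "xlnx (qt m) \<le> (1 - t) * xlnx (q m) + t * xlnx (\<eta> m) + (if m = m0 then t * \<eta> m0 * ln t else 0)"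
    for m
  proof (cases "m = m0")
    case True
    have "qt m0 = t * \<eta> m0" using q0 by (simp add: qt_def)
    then have "xlnx (qt m0) = t * \<eta> m0 * ln t + t * xlnx (\<eta> m0)"
      using t0 pos by (simp add: xlnx_def ln_mult algebra_simps)
    then show ?thesis using True q0 by (simp add: xlnx_def)
  next
    case False
    then show ?thesis using xlnx_convex[of "q m" "\<eta> m" t] q eta t0 t1
      by (simp add: qt_def is_dist_def)
  qed
  have "E qt \<le> (\<Sum>m\<in>?S. (1 - t) * xlnx (q m) + t * xlnx (\<eta> m) + (if m = m0 then t * \<eta> m0 * ln t else 0))"
    unfolding E_def by (rule sum_mono) (rule trm)
  also have "\<dots> = (1 - t) * E q + t * E \<eta> + t * \<eta> m0 * ln t"
    using m0 fS by (simp add: E_def sum.distrib sum_distrib_left)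
  finally have "E q \<le> (1 - t) * E q + t * E \<eta> + t * \<eta> m0 * ln t" using Eq by linarith
  then have "t * E q \<le> t * (E \<eta> + \<eta> m0 * ln t)" by (simp add: algebra_simps)
  then have "E q \<le> E \<eta> + \<eta> m0 * ln t" using t0 by simp
  then have "(E q - E \<eta>) / \<eta> m0 \<le> ln t" using pos by (simp add: divide_le_eq mult.commute)
  then show False using lnt c_def by linarith
qed

lemma part1:
  fixes A :: "'n::finite \<Rightarrow> 'a set"
  assumes fin: "\<And>i. finite (A i)" and mu: "is_dist (profiles A) \<mu>"
    and imp: "implements A u M \<eta> F \<mu>"
  shows "jointly_coherent A u \<mu>"
proof -
  from imp obtain \<sigma> q where dgp: "valid_DGP M \<eta>" and me: "maxent_belief M \<eta> F q"
    and \<sigma>: "valid_strategy A M \<sigma>" and opt: "eps_optimal A u M q \<sigma> 0"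
    and out: "\<forall>a\<in>profiles A. \<mu> a = outcome M \<eta> \<sigma> a"
    by (auto simp: eps_implements_def)
  have finM: "\<And>i. finite (M i)" and eta: "is_dist (profiles M) \<eta>" using dgp by (auto simp: valid_DGP_def)
  have q: "is_dist (profiles M) q" using me by (simp add: maxent_belief_def Delta_D_def)
  have ce: "correlated_eq A u (outcome M q \<sigma>)" using ce_of_opt[OF fin finM q \<sigma> opt] .
  have fPM: "finite (profiles M)" using finite_profiles[OF finM] .
  have "outcome M q \<sigma> a \<noteq> 0" if a: "\<mu> a \<noteq> 0" for a
  proof -
    have aP: "a \<in> profiles A" using a mu by (auto simp: is_dist_def)
    then have "outcome M \<eta> \<sigma> a \<noteq> 0" using out a by simp
    then obtain m where m: "m \<in> profiles M" and nz: "\<eta> m * (\<Prod>j\<in>UNIV. \<sigma> j (m j) (a j)) \<noteq> 0"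
      unfolding outcome_def by (rule sum.not_neutral_contains_not_neutral)
    have \<sigma>nn: "(\<Prod>j\<in>UNIV. \<sigma> j (m j) (a j)) \<ge> 0"
      using \<sigma> m by (auto simp: valid_strategy_def profiles_def is_dist_def intro!: prod_nonneg)
    have "\<eta> m \<ge> 0" using eta by (simp add: is_dist_def)
    then have "\<eta> m > 0" using nz by (metis mult_zero_left order_le_neq_trans)
    then have qm: "q m > 0" using maxent_supp[OF finM me eta] by blast
    have pp: "(\<Prod>j\<in>UNIV. \<sigma> j (m j) (a j)) > 0" using nz \<sigma>nn by (metis mult_zero_right order_le_neq_trans)
    have "0 < q m * (\<Prod>j\<in>UNIV. \<sigma> j (m j) (a j))" using qm pp by simp
    also have "\<dots> \<le> outcome M q \<sigma> a" unfolding outcome_def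
      by (rule member_le_sum[OF m _ fPM])
        (use q \<sigma> in \<open>auto simp: is_dist_def valid_strategy_def profiles_def intro!: mult_nonneg_nonneg prod_nonneg\<close>)
    finally show ?thesis by simp
  qed
  then show ?thesis using mu ce unfolding jointly_coherent_def supp_CE_def by blast
qed


lemma sum_reindex_zero:
  assumes fY: "finite Y" and sub: "\<Phi> ` X \<subseteq> Y" and inj: "inj_on \<Phi> X"
    and z: "\<forall>y\<in>Y - \<Phi> ` X. g y = 0"
  shows "sum g Y = (\<Sum>x\<in>X. g (\<Phi> x))"
proof -
  have "sum g Y = sum g (\<Phi> ` X)" using sum.mono_neutral_right[OF fY sub] z by simp
  also have "\<dots> = (\<Sum>x\<in>X. g (\<Phi> x))" using sum.reindex[OF inj] by simp
  finally show ?thesis .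
qed

lemma sum_lift:
  fixes f :: "'x \<Rightarrow> real" and G :: "'y \<Rightarrow> real"
  assumes fY: "finite Y" and sub: "\<Phi> ` X \<subseteq> Y" and inj: "inj_on \<Phi> X"
  shows "(\<Sum>m\<in>Y. (if m \<in> \<Phi> ` X then f (the_inv_into X \<Phi> m) else 0) * G m) = (\<Sum>x\<in>X. f x * G (\<Phi> x))"
  by (subst sum_reindex_zero[OF fY sub inj]) (auto simp: the_inv_into_f_f[OF inj])

lemma lift_dist:
  fixes f :: "'x \<Rightarrow> real"
  assumes fY: "finite Y" and sub: "\<Phi> ` X \<subseteq> Y" and inj: "inj_on \<Phi> X"
    and d: "is_dist X f"
  shows "is_dist Y (\<lambda>m. if m \<in> \<Phi> ` X then f (the_inv_into X \<Phi> m) else 0)"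
proof -
  have "(\<Sum>m\<in>Y. (if m \<in> \<Phi> ` X then f (the_inv_into X \<Phi> m) else 0) * 1) = (\<Sum>x\<in>X. f x * 1)"
    by (rule sum_lift[OF fY sub inj])
  then show ?thesis using d sub by (auto simp: is_dist_def)
qed

lemma prod_dist:
  assumes "is_dist P f1" "is_dist T f2" "finite P" "finite T"
  shows "is_dist (P \<times> T) (\<lambda>(a, t). f1 a * f2 t)"
proof -
  have "(\<Sum>x\<in>P \<times> T. (\<lambda>(a, t). f1 a * f2 t) x) = sum f1 P * sum f2 T"
    by (simp add: sum_product sum.cartesian_product)
  then show ?thesis using assms by (auto simp: is_dist_def)
qed

lemma sum_product_split:
  fixes f1 g1 :: "'a \<Rightarrow> real" and f2 g2 :: "'b \<Rightarrow> real"
  shows "(\<Sum>x\<in>P \<times> T. (\<lambda>(a, t). f1 a * f2 t * (g1 a + g2 t)) x)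
      = sum f2 T * (\<Sum>a\<in>P. f1 a * g1 a) + sum f1 P * (\<Sum>t\<in>T. f2 t * g2 t)"
  by (simp add: sum.cartesian_product[symmetric] algebra_simps sum.distrib sum_distrib_left
      sum_distrib_right sum_product) (subst sum.swap, simp add: algebra_simps)

lemma pure_dist: "finite S \<Longrightarrow> x \<in> S \<Longrightarrow> is_dist S (pure x)"
  by (auto simp: is_dist_def pure_def)

lemma prod_pure: "(\<Prod>j\<in>(UNIV::'n::finite set). pure (a j) (a' j)) = (if a = a' then 1 else 0)"
proof (cases "a = a'")
  case False
  then obtain j where "a j \<noteq> a' j" by auto
  then show ?thesis using False by (intro trans[OF prod_zero]) (auto simp: pure_def intro!: bexI[of _ j])
qed (simp add: pure_def)

lemma mixed_util_pure:
  fixes A :: "'n::finite \<Rightarrow> 'a set"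
  assumes fin: "\<And>i. finite (A i)" and a: "a \<in> profiles A"
  shows "mixed_util A u i (\<lambda>j. pure (a j)) = u i a"
proof -
  have fPA: "finite (profiles A)" by (rule finite_profiles[OF fin])
  have "(\<lambda>aa. (if a = aa then 1 else 0) * u i aa) = (\<lambda>aa. if a = aa then u i a else 0)" by auto
  then show ?thesis unfolding mixed_util_def prod_pure using fPA a by (simp only:) simp
qed

lemma ce_uncond:
  fixes A :: "'n::finite \<Rightarrow> 'a set"
  assumes fin: "\<And>i. finite (A i)" and p: "correlated_eq A u p" and ai: "ai \<in> A i" and b: "b \<in> A i"
  shows "(\<Sum>a\<in>{a\<in>profiles A. a i = ai}. p a * (u i a - u i (a(i := b)))) \<ge> 0"
proof (cases "(\<Sum>a\<in>{a\<in>profiles A. a i = ai}. p a) > 0")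
  case True then show ?thesis using p ai b by (auto simp: correlated_eq_def)
next
  case False
  have fPA: "finite (profiles A)" by (rule finite_profiles[OF fin])
  have f: "finite {a\<in>profiles A. a i = ai}" using fPA by simp
  have nn: "\<forall>a. p a \<ge> 0" using p by (simp add: correlated_eq_def is_dist_def)
  then have "(\<Sum>a\<in>{a\<in>profiles A. a i = ai}. p a) \<ge> 0" by (simp add: sum_nonneg)
  then have "(\<Sum>a\<in>{a\<in>profiles A. a i = ai}. p a) = 0" using False by linarith
  then have "\<forall>a\<in>{a\<in>profiles A. a i = ai}. p a = 0" using sum_nonneg_eq_0_iff[OF f] nn by auto
  then show ?thesis by simp
qed

lemma ce_combine:
  fixes A :: "'n::finite \<Rightarrow> 'a set"
  assumes fin: "\<And>i. finite (A i)" and jc: "jointly_coherent A u \<mu>"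
  shows "\<exists>p. correlated_eq A u p \<and> (\<forall>a. \<mu> a \<noteq> 0 \<longrightarrow> p a > 0)"
proof -
  define S where "S = {a. \<mu> a \<noteq> 0}"
  have mu: "is_dist (profiles A) \<mu>" using jc by (simp add: jointly_coherent_def)
  have SP: "S \<subseteq> profiles A" using mu by (auto simp: S_def is_dist_def)
  have fPA: "finite (profiles A)" by (rule finite_profiles[OF fin])
  have fS: "finite S" using finite_subset[OF SP fPA] .
  have "S \<noteq> {}"
  proof
    assume "S = {}"
    then have "\<forall>a. \<mu> a = 0" by (auto simp: S_def)
    then show False using mu by (simp add: is_dist_def)
  qed
  then have cS: "card S > 0" using fS by (simp add: card_gt_0_iff)
  have "\<forall>a\<in>S. \<exists>p. correlated_eq A u p \<and> p a \<noteq> 0"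
    using jc by (auto simp: jointly_coherent_def supp_CE_def S_def)
  then obtain P where P: "\<forall>a\<in>S. correlated_eq A u (P a) \<and> P a a \<noteq> 0" by metis
  define p where "p x = (\<Sum>a\<in>S. P a x) / card S" for x
  have Pd: "is_dist (profiles A) (P a)" if "a \<in> S" for a using P that by (simp add: correlated_eq_def)
  have dist: "is_dist (profiles A) p"
  proof -
    have sw: "(\<Sum>x\<in>profiles A. \<Sum>a\<in>S. P a x) = (\<Sum>a\<in>S. sum (P a) (profiles A))"
      by (rule sum.swap)
    have "sum p (profiles A) = (\<Sum>a\<in>S. sum (P a) (profiles A)) / card S"
      unfolding p_def by (simp add: sum_divide_distrib[symmetric] sw)
    also have "\<dots> = 1" using Pd cS by (simp add: is_dist_def)
    finally show ?thesis using Pd by (auto simp: is_dist_def p_def intro!: sum_nonneg divide_nonneg_nonneg)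
  qed
  have ce: "correlated_eq A u p"
    unfolding correlated_eq_def
  proof (intro conjI dist allI ballI impI)
    fix i ai b assume ai: "ai \<in> A i" and b: "b \<in> A i"
    have "(\<Sum>x\<in>{x\<in>profiles A. x i = ai}. p x * (u i x - u i (x(i := b))))
        = (\<Sum>a\<in>S. \<Sum>x\<in>{x\<in>profiles A. x i = ai}. P a x * (u i x - u i (x(i := b)))) / card S"
    proof -
      have "(\<Sum>x\<in>{x\<in>profiles A. x i = ai}. p x * (u i x - u i (x(i := b))))
         = (\<Sum>x\<in>{x\<in>profiles A. x i = ai}. \<Sum>a\<in>S. P a x * (u i x - u i (x(i := b))) / card S)"
        unfolding p_def by (simp add: sum_distrib_right sum_divide_distrib)
      also have "\<dots> = (\<Sum>a\<in>S. \<Sum>x\<in>{x\<in>profiles A. x i = ai}. P a x * (u i x - u i (x(i := b))) / card S)"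
        by (rule sum.swap)
      finally show ?thesis by (simp add: sum_divide_distrib)
    qed
    also have "\<dots> \<ge> 0"
    proof -
      have "\<forall>a\<in>S. 0 \<le> (\<Sum>x\<in>{x\<in>profiles A. x i = ai}. P a x * (u i x - u i (x(i := b))))"
        using ce_uncond[where A=A and ai=ai and b=b and i=i and u=u, OF fin _ ai b] P by blast
      then show ?thesis by (meson divide_nonneg_nonneg of_nat_0_le_iff sum_nonneg)
    qed
    finally show "(\<Sum>x\<in>{x\<in>profiles A. x i = ai}. p x * (u i x - u i (x(i := b)))) \<ge> 0" .
  qed
  have "p a > 0" if "\<mu> a \<noteq> 0" for a
  proof -
    have aS: "a \<in> S" using that by (simp add: S_def)
    have "P a a \<ge> 0" using Pd[OF aS] by (simp add: is_dist_def)
    then have "P a a > 0" using P aS by (metis order_le_neq_trans)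
    also have "P a a \<le> (\<Sum>b\<in>S. P b a)"
      by (rule member_le_sum[OF aS _ fS]) (use Pd in \<open>auto simp: is_dist_def\<close>)
    finally show ?thesis using cS by (simp add: p_def)
  qed
  then show ?thesis using ce by blast
qed


lemma tags_exist:
  fixes D :: real
  shows "\<exists>N::nat. \<exists>r \<nu>. is_dist {..N} r \<and> is_dist {..N} \<nu> \<and> (\<forall>t\<in>{..N}. r t > 0) \<and>
      (\<Sum>t\<in>{..N}. \<nu> t * ln (r t)) - (\<Sum>t\<in>{..N}. r t * ln (r t)) = D"
proof -
  define N :: nat where "N = nat \<lceil>exp (2 * \<bar>D\<bar>)\<rceil> + 2"
  have "real N = real (nat \<lceil>exp (2 * \<bar>D\<bar>)\<rceil>) + 2" unfolding N_def by (simp only: of_nat_add of_nat_numeral)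
  moreover have "exp (2 * \<bar>D\<bar>) > -1" by (rule less_trans[OF _ exp_gt_zero]) simp
  ultimately have N2: "real N \<ge> 2" by simp
  have Ne: "real N \<ge> exp (2 * \<bar>D\<bar>)"
  proof -
    have "real N = real (nat \<lceil>exp (2 * \<bar>D\<bar>)\<rceil>) + 2" unfolding N_def by (simp only: of_nat_add of_nat_numeral)
    moreover have "real (nat \<lceil>exp (2 * \<bar>D\<bar>)\<rceil>) \<ge> exp (2 * \<bar>D\<bar>)"
    proof -
      have "0 \<le> \<lceil>exp (2 * \<bar>D\<bar>)\<rceil>"
        using ceiling_mono[of 0 "exp (2 * \<bar>D\<bar>)"] by simp
      then have "real (nat \<lceil>exp (2 * \<bar>D\<bar>)\<rceil>) = of_int \<lceil>exp (2 * \<bar>D\<bar>)\<rceil>" by simp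
      then show ?thesis using le_of_int_ceiling[of "exp (2 * \<bar>D\<bar>)"] by simp
    qed
    ultimately show ?thesis by linarith
  qed
  define lN where "lN = ln (real N)"
  have lNpos: "lN > 0" using N2 by (simp add: lN_def)
  have lNge: "2 * \<bar>D\<bar> \<le> lN" using Ne N2 by (simp add: lN_def ln_ge_iff)
  define lam where "lam = 1/2 + D / lN"
  have "\<bar>D / lN\<bar> = \<bar>D\<bar> / lN" using lNpos by (simp add: abs_divide)
  also have "\<dots> \<le> 1/2" using lNge by (subst pos_divide_le_eq[OF lNpos]) linarith
  finally have "\<bar>D / lN\<bar> \<le> 1/2" .
  then have h1: "- (1/2) \<le> D / lN" and h2: "D / lN \<le> 1/2" by arith+
  then have lam0: "0 \<le> lam" and lam1: "lam \<le> 1" unfolding lam_def by linarith+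
  define r where "r t = (if t = 0 then 1/2 else if t \<le> N then 1 / (2 * real N) else 0)" for t
  define \<nu> where "\<nu> (t::nat) = (if t = 0 then lam else if t = 1 then 1 - lam else 0)" for t
  have N0: "N > 0" using N2 by simp
  have sr: "sum r {..N} = 1"
    unfolding sum.atMost_shift using N0 by (simp add: r_def)
  have sn: "sum \<nu> {..N} = 1"
    unfolding sum.atMost_shift using N0 by (simp add: \<nu>_def)
  have rd: "is_dist {..N} r" using sr by (auto simp: is_dist_def r_def)
  have nd: "is_dist {..N} \<nu>" using sn lam0 lam1 N0 by (auto simp: is_dist_def \<nu>_def)
  have rpos: "\<forall>t\<in>{..N}. r t > 0" using N0 by (auto simp: r_def)
  have s1: "(\<Sum>t\<in>{..N}. \<nu> t * ln (r t)) = lam * ln (1/2) + (1 - lam) * ln (1 / (2 * real N))"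
    unfolding sum.atMost_shift using N0
    by (simp add: \<nu>_def r_def if_distrib[where f="\<lambda>x. x * ln (1 / (2 * real N))"] cong: if_cong)
  have s2: "(\<Sum>t\<in>{..N}. r t * ln (r t)) = 1/2 * ln (1/2) + 1/2 * ln (1 / (2 * real N))"
    unfolding sum.atMost_shift using N0 by (simp add: r_def)
  have l1: "ln (1 / (2 * real N)) = - ln 2 - lN" using N0 by (simp add: lN_def ln_div ln_mult)
  have l2: "ln (1/2::real) = - ln 2" by (simp add: ln_div)
  have "(\<Sum>t\<in>{..N}. \<nu> t * ln (r t)) - (\<Sum>t\<in>{..N}. r t * ln (r t)) = (lam - 1/2) * lN"
    unfolding s1 s2 l1 l2 by (simp add: algebra_simps)
  also have "\<dots> = D" using lNpos by (simp add: lam_def)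
  finally show ?thesis using rd nd rpos by blast
qed


lemma construct:
  fixes A :: "'n::finite \<Rightarrow> 'a set" and u :: "'n \<Rightarrow> ('n \<Rightarrow> 'a) \<Rightarrow> real"
  assumes fin: "\<And>i. finite (A i)"
    and p: "correlated_eq A u p" and mu: "is_dist (profiles A) \<mu>"
    and supp: "\<forall>a. \<mu> a \<noteq> 0 \<longrightarrow> p a > 0"
  shows "\<exists>M \<eta> F. implements A u M \<eta> F \<mu>"
proof -
  define PA where "PA = profiles A"
  have fPA: "finite PA" unfolding PA_def by (rule finite_profiles[OF fin])
  have pd: "is_dist PA p" using p by (simp add: correlated_eq_def PA_def)
  have mud: "is_dist PA \<mu>" using mu by (simp add: PA_def)
  have pnn: "\<And>a. p a \<ge> 0" using pd by (simp add: is_dist_def)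
  have munn: "\<And>a. \<mu> a \<ge> 0" using mud by (simp add: is_dist_def)
  define L where "L a = (if p a > 0 then ln (p a) else 0)" for a
  define D where "D = (\<Sum>a\<in>PA. (p a - \<mu> a) * L a)"
  obtain N :: nat and r \<nu> :: "nat \<Rightarrow> real" where rd: "is_dist {..N} r" and nd: "is_dist {..N} \<nu>" and rpos: "\<forall>t\<in>{..N}. r t > 0"
    and key: "(\<Sum>t\<in>{..N}. \<nu> t * ln (r t)) - (\<Sum>t\<in>{..N}. r t * ln (r t)) = D"
    using tags_exist[of D] by blast
  define T where "T = {..N}"
  have fT: "finite T" by (simp add: T_def)
  define U where "U = (\<Union>i. A i)"
  have fU: "finite U" unfolding U_def using fin by simp
  then have cU: "countable U" by (rule countable_finite)
  define e where "e = to_nat_on U"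
  define dec where "dec = from_nat_into U"
  have dec_e: "\<And>x. x \<in> U \<Longrightarrow> dec (e x) = x" using cU by (simp add: dec_def e_def)
  have AU: "\<And>i x. x \<in> A i \<Longrightarrow> x \<in> U" by (auto simp: U_def)
  define code where "code x t = prod_encode (e x, t)" for x and t :: nat
  have code_inj: "x = y \<and> t = s" if "x \<in> U" "y \<in> U" "code x t = code y s" for x y t s
  proof -
    have "e x = e y" "t = s" using that by (auto simp: code_def)
    then show ?thesis using dec_e that by metis
  qed
  define M where "M i = (\<lambda>(x, t). code x t) ` (A i \<times> T)" for i
  have finM: "\<And>i. finite (M i)" using fin fT by (simp add: M_def)
  have fPM: "finite (profiles M)" by (rule finite_profiles[OF finM])
  define X where "X = PA \<times> T"
  define \<Phi> :: "(('n \<Rightarrow> 'a) \<times> nat) \<Rightarrow> 'n \<Rightarrow> nat" where "\<Phi> = (\<lambda>(a, t). (\<lambda>i. code (a i) t))"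
  have \<Phi>i: "\<And>a t i. \<Phi> (a, t) i = code (a i) t" by (simp add: \<Phi>_def)
  have injX: "inj_on \<Phi> X"
  proof (rule inj_onI)
    fix x y assume x: "x \<in> X" and y: "y \<in> X" and eq: "\<Phi> x = \<Phi> y"
    obtain a t where xa: "x = (a, t)" by (cases x)
    obtain b s where yb: "y = (b, s)" by (cases y)
    have aP: "a \<in> PA" "b \<in> PA" using x y xa yb by (auto simp: X_def)
    have "\<forall>i. a i = b i \<and> t = s"
    proof
      fix i
      have "code (a i) t = code (b i) s" using eq xa yb \<Phi>i by metis
      moreover have "a i \<in> U" "b i \<in> U" using AU aP by (auto simp: PA_def profiles_def)
      ultimately show "a i = b i \<and> t = s" using code_inj by blast
    qed
    then show "x = y" using xa yb by auto
  qed
  have subX: "\<Phi> ` X \<subseteq> profiles M"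
    by (auto simp: X_def PA_def profiles_def M_def \<Phi>_def)
  define qX where "qX = (\<lambda>(a, t). p a * r t)"
  define \<eta>X where "\<eta>X = (\<lambda>(a, t). \<mu> a * \<nu> t)"
  define q where "q m = (if m \<in> \<Phi> ` X then qX (the_inv_into X \<Phi> m) else 0)" for m
  define \<eta> where "\<eta> m = (if m \<in> \<Phi> ` X then \<eta>X (the_inv_into X \<Phi> m) else 0)" for m
  have q\<Phi>: "\<And>x. x \<in> X \<Longrightarrow> q (\<Phi> x) = qX x" by (simp add: q_def the_inv_into_f_f[OF injX])
  have \<eta>\<Phi>: "\<And>x. x \<in> X \<Longrightarrow> \<eta> (\<Phi> x) = \<eta>X x" by (simp add: \<eta>_def the_inv_into_f_f[OF injX])
  have qXd: "is_dist X qX" unfolding X_def qX_def T_def using prod_dist[OF pd rd fPA] by simp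
  have \<eta>Xd: "is_dist X \<eta>X" unfolding X_def \<eta>X_def T_def using prod_dist[OF mud nd fPA] by simp
  have qd: "is_dist (profiles M) q" unfolding q_def by (rule lift_dist[OF fPM subX injX qXd])
  have \<eta>d: "is_dist (profiles M) \<eta>" unfolding \<eta>_def by (rule lift_dist[OF fPM subX injX \<eta>Xd])
  have supp_q: "\<eta> m = 0" if "q m = 0" for m
  proof (cases "m \<in> \<Phi> ` X")
    case True
    then obtain a t where at: "(a, t) \<in> X" "m = \<Phi> (a, t)" by auto
    then have "p a * r t = 0" using that q\<Phi> by (simp add: qX_def)
    moreover have "r t > 0" using rpos at by (auto simp: X_def T_def)
    ultimately have "p a = 0" by simp
    then have "\<mu> a = 0" using supp by force
    then show ?thesis using at \<eta>\<Phi> by (simp add: \<eta>X_def)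
  qed (simp add: \<eta>_def)
  define hf where "hf m = (if q m = 0 then 1 else 0 :: real)" for m
  define gf where "gf m = (if q m = 0 then 0 else ln (q m))" for m
  define F where "F = {hf, gf}"
  define \<sigma> where "\<sigma> i mi = pure (dec (fst (prod_decode mi)))" for i :: 'n and mi :: nat
  have \<sigma>code: "\<And>j x t. x \<in> A j \<Longrightarrow> \<sigma> j (code x t) = pure x"
    using dec_e AU by (simp add: \<sigma>_def code_def)
  have \<sigma>\<Phi>: "(\<lambda>j. \<sigma> j (\<Phi> (a, t) j)) = (\<lambda>j. pure (a j))" if "a \<in> PA" for a t
    using that \<sigma>code by (auto simp: \<Phi>i PA_def profiles_def)
  have hq: "(\<Sum>m\<in>profiles M. q m * hf m) = 0" by (rule sum.neutral) (simp add: hf_def)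
  have h\<eta>: "(\<Sum>m\<in>profiles M. \<eta> m * hf m) = 0" by (rule sum.neutral) (simp add: hf_def supp_q)
  have gq: "(\<Sum>m\<in>profiles M. q m * gf m) = (\<Sum>a\<in>PA. p a * L a) + (\<Sum>t\<in>T. r t * ln (r t))"
  proof -
    have "(\<Sum>m\<in>profiles M. q m * gf m) = (\<Sum>x\<in>X. qX x * gf (\<Phi> x))"
      unfolding q_def by (rule sum_lift[OF fPM subX injX])
    also have "\<dots> = (\<Sum>x\<in>PA \<times> T. (\<lambda>(a, t). p a * r t * (L a + ln (r t))) x)"
    proof (rule sum.cong)
      fix x assume x: "x \<in> PA \<times> T"
      obtain a t where at: "x = (a, t)" by (cases x)
      have rt: "r t > 0" using rpos x at by (auto simp: T_def)
      have gx: "gf (\<Phi> x) = (if p a * r t = 0 then 0 else ln (p a * r t))"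
        using q\<Phi>[of x] x at by (simp add: gf_def qX_def X_def)
      show "qX x * gf (\<Phi> x) = (\<lambda>(a, t). p a * r t * (L a + ln (r t))) x"
      proof (cases "p a = 0")
        case True then show ?thesis using at by (simp add: qX_def)
      next
        case False
        then have "p a > 0" using pnn[of a] by linarith
        then show ?thesis using at gx rt by (simp add: qX_def L_def ln_mult)
      qed
    qed (simp add: X_def)
    also have "\<dots> = sum r T * (\<Sum>a\<in>PA. p a * L a) + sum p PA * (\<Sum>t\<in>T. r t * ln (r t))"
      by (rule sum_product_split)
    finally show ?thesis using pd rd by (simp add: is_dist_def T_def)
  qed
  have g\<eta>: "(\<Sum>m\<in>profiles M. \<eta> m * gf m) = (\<Sum>a\<in>PA. \<mu> a * L a) + (\<Sum>t\<in>T. \<nu> t * ln (r t))"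
  proof -
    have "(\<Sum>m\<in>profiles M. \<eta> m * gf m) = (\<Sum>x\<in>X. \<eta>X x * gf (\<Phi> x))"
      unfolding \<eta>_def by (rule sum_lift[OF fPM subX injX])
    also have "\<dots> = (\<Sum>x\<in>PA \<times> T. (\<lambda>(a, t). \<mu> a * \<nu> t * (L a + ln (r t))) x)"
    proof (rule sum.cong)
      fix x assume x: "x \<in> PA \<times> T"
      obtain a t where at: "x = (a, t)" by (cases x)
      have rt: "r t > 0" using rpos x at by (auto simp: T_def)
      have gx: "gf (\<Phi> x) = (if p a * r t = 0 then 0 else ln (p a * r t))"
        using q\<Phi>[of x] x at by (simp add: gf_def qX_def X_def)
      show "\<eta>X x * gf (\<Phi> x) = (\<lambda>(a, t). \<mu> a * \<nu> t * (L a + ln (r t))) x"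
      proof (cases "\<mu> a = 0")
        case True then show ?thesis using at by (simp add: \<eta>X_def)
      next
        case False
        then have "p a > 0" using supp by blast
        then show ?thesis using at gx rt by (simp add: \<eta>X_def L_def ln_mult)
      qed
    qed (simp add: X_def)
    also have "\<dots> = sum \<nu> T * (\<Sum>a\<in>PA. \<mu> a * L a) + sum \<mu> PA * (\<Sum>t\<in>T. \<nu> t * ln (r t))"
      by (rule sum_product_split)
    finally show ?thesis using mud nd by (simp add: is_dist_def T_def)
  qed
  have Dsplit: "D = (\<Sum>a\<in>PA. p a * L a) - (\<Sum>a\<in>PA. \<mu> a * L a)"
    by (simp add: D_def algebra_simps sum_subtractf)
  have gsum: "(\<Sum>m\<in>profiles M. \<eta> m * gf m) = (\<Sum>m\<in>profiles M. q m * gf m)"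
    using gq g\<eta> key Dsplit by (simp add: T_def)
  have qD: "q \<in> Delta_D M \<eta> F"
    using qd hq h\<eta> gsum by (simp add: Delta_D_def F_def)
  have me: "maxent_belief M \<eta> F q"
    unfolding maxent_belief_def
  proof (intro conjI qD ballI impI)
    fix q' assume q'D: "q' \<in> Delta_D M \<eta> F"
    have q'd: "is_dist (profiles M) q'" using q'D by (simp add: Delta_D_def)
    have h': "(\<Sum>m\<in>profiles M. q' m * hf m) = 0" using q'D h\<eta> by (simp add: Delta_D_def F_def)
    have g': "(\<Sum>m\<in>profiles M. q' m * gf m) = (\<Sum>m\<in>profiles M. q m * gf m)"
      using q'D gsum by (simp add: Delta_D_def F_def)
    have sub: "\<forall>m\<in>profiles M. q m = 0 \<longrightarrow> q' m = 0"
    proof (intro ballI impI)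
      fix m assume m: "m \<in> profiles M" and qm: "q m = 0"
      have "\<forall>m\<in>profiles M. q' m * hf m = 0"
        using sum_nonneg_eq_0_iff[OF fPM, of "\<lambda>m. q' m * hf m"] h' q'd
        by (auto simp: hf_def is_dist_def)
      then show "q' m = 0" using m qm by (auto simp: hf_def)
    qed
    have G: "entropy (profiles M) q' \<le> entropy (profiles M) q \<and>
             (entropy (profiles M) q' = entropy (profiles M) q \<longrightarrow> q' = q)"
      by (rule gibbs[OF fPM qd q'd sub _ g']) (simp add: gf_def fun_eq_iff)
    then show "entropy (profiles M) q' \<le> entropy (profiles M) q" by blast
    fix q'' assume "q'' \<in> Delta_D M \<eta> F" 
    show "entropy (profiles M) q' = entropy (profiles M) q \<Longrightarrow> q' = q" using G by blast
  qed
  have dgp: "valid_DGP M \<eta>" using finM \<eta>d by (simp add: valid_DGP_def)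
  have vs: "valid_strategy A M \<sigma>"
    unfolding valid_strategy_def
  proof (intro allI ballI)
    fix i mi assume "mi \<in> M i"
    then obtain x t where x: "x \<in> A i" and mi: "mi = code x t" by (auto simp: M_def)
    show "is_dist (A i) (\<sigma> i mi)" using pure_dist[OF fin x] \<sigma>code[OF x] mi by simp
  qed
  have opt: "eps_optimal A u M q \<sigma> 0"
    unfolding eps_optimal_def
  proof (intro allI ballI impI)
    fix i mi b assume mi: "mi \<in> M i" and b: "b \<in> A i"
    obtain x0 t0 where x0: "x0 \<in> A i" and t0: "t0 \<in> T" and mi0: "mi = code x0 t0"
      using mi by (auto simp: M_def)
    define Fb where "Fb = {a\<in>PA. a i = x0}"
    define X' where "X' = Fb \<times> {t0}"
    have X'X: "X' \<subseteq> X" using t0 by (auto simp: X'_def X_def Fb_def)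
    define g where "g m = q m * (mixed_util A u i (\<lambda>j. \<sigma> j (m j))
                   - mixed_util A u i ((\<lambda>j. \<sigma> j (m j))(i := pure b)))" for m
    have "(\<Sum>m\<in>{m\<in>profiles M. m i = mi}. g m) = (\<Sum>x\<in>X'. g (\<Phi> x))"
    proof (rule sum_reindex_zero)
      show "finite {m\<in>profiles M. m i = mi}" using fPM by simp
      show "\<Phi> ` X' \<subseteq> {m\<in>profiles M. m i = mi}"
        using subX X'X mi0 by (auto simp: X'_def Fb_def \<Phi>i)
      show "inj_on \<Phi> X'" using injX X'X by (rule inj_on_subset)
      show "\<forall>y\<in>{m\<in>profiles M. m i = mi} - \<Phi> ` X'. g y = 0"
      proof
        fix y assume y: "y \<in> {m\<in>profiles M. m i = mi} - \<Phi> ` X'"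
        have "y \<notin> \<Phi> ` X"
        proof
          assume "y \<in> \<Phi> ` X"
          then obtain a t where at: "(a, t) \<in> X" "y = \<Phi> (a, t)" by auto
          then have "code (a i) t = code x0 t0" using y mi0 by (simp add: \<Phi>i)
          moreover have "a i \<in> U" using at AU by (auto simp: X_def PA_def profiles_def)
          ultimately have "a i = x0 \<and> t = t0" using code_inj AU[OF x0] by blast
          then have "(a, t) \<in> X'" using at by (auto simp: X'_def X_def Fb_def)
          then show False using y at by auto
        qed
        then show "g y = 0" by (simp add: g_def q_def)
      qed
    qed
    also have "\<dots> = (\<Sum>a\<in>Fb. g (\<Phi> (a, t0)))"
    proof -
      have e: "X' = (\<lambda>a. (a, t0)) ` Fb" by (auto simp: X'_def)
      show ?thesis unfolding e by (subst sum.reindex) (auto simp: inj_on_def)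
    qed
    also have "\<dots> = r t0 * (\<Sum>a\<in>Fb. p a * (u i a - u i (a(i := b))))"
      unfolding sum_distrib_left
    proof (rule sum.cong)
      fix a assume a: "a \<in> Fb"
      then have aP: "a \<in> PA" by (simp add: Fb_def)
      have ab: "a(i := b) \<in> PA" using aP b by (auto simp: PA_def profiles_def)
      have upd: "(\<lambda>j. pure (a j))(i := pure b) = (\<lambda>j. pure ((a(i := b)) j))" by auto
      have "q (\<Phi> (a, t0)) = p a * r t0" using q\<Phi>[of "(a, t0)"] aP t0 by (simp add: X_def qX_def)
      then show "g (\<Phi> (a, t0)) = r t0 * (p a * (u i a - u i (a(i := b))))"
        unfolding g_def \<sigma>\<Phi>[OF aP] upd
        using mixed_util_pure[OF fin, where a=a and u=u and i=i] mixed_util_pure[OF fin, where a="a(i := b)" and u=u and i=i] aP ab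
        by (simp add: PA_def)
    qed simp
    also have "\<dots> \<ge> 0"
      using ce_uncond[where A=A and ai=x0 and b=b and i=i and u=u, OF fin p x0 b] rpos t0
      by (simp add: Fb_def PA_def T_def less_imp_le)
    finally show "(\<Sum>m\<in>{m\<in>profiles M. m i = mi}. q m * (mixed_util A u i (\<lambda>j. \<sigma> j (m j))
                   - mixed_util A u i ((\<lambda>j. \<sigma> j (m j))(i := pure b)))) \<ge> - 0"
      by (simp add: g_def)
  qed
  have out: "\<forall>a\<in>profiles A. \<mu> a = outcome M \<eta> \<sigma> a"
  proof
    fix a' assume a': "a' \<in> profiles A"
    have "outcome M \<eta> \<sigma> a' = (\<Sum>x\<in>X. \<eta>X x * (\<Prod>j\<in>UNIV. \<sigma> j (\<Phi> x j) (a' j)))"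
      unfolding outcome_def \<eta>_def by (rule sum_lift[OF fPM subX injX])
    also have "\<dots> = (\<Sum>x\<in>PA \<times> T. (\<lambda>(a, t). if a = a' then \<mu> a * \<nu> t else 0) x)"
    proof (rule sum.cong)
      fix x assume x: "x \<in> PA \<times> T"
      obtain a t where at: "x = (a, t)" by (cases x)
      have aP: "a \<in> PA" using x at by simp
      have "(\<Prod>j\<in>UNIV. \<sigma> j (\<Phi> x j) (a' j)) = (\<Prod>j\<in>UNIV. pure (a j) (a' j))"
        using fun_cong[OF \<sigma>\<Phi>[OF aP, of t]] at by simp
      then show "\<eta>X x * (\<Prod>j\<in>UNIV. \<sigma> j (\<Phi> x j) (a' j)) = (\<lambda>(a, t). if a = a' then \<mu> a * \<nu> t else 0) x"
        using at by (simp add: prod_pure \<eta>X_def)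
    qed (simp add: X_def)
    also have "\<dots> = (\<Sum>a\<in>PA. \<Sum>t\<in>T. if a = a' then \<mu> a * \<nu> t else 0)"
      by (simp add: sum.cartesian_product)
    also have "\<dots> = (\<Sum>a\<in>PA. if a = a' then (\<Sum>t\<in>T. \<mu> a * \<nu> t) else 0)"
      by (rule sum.cong) auto
    also have "\<dots> = (\<Sum>t\<in>T. \<mu> a' * \<nu> t)"
      using a' fPA by (simp add: PA_def)
    also have "\<dots> = \<mu> a'" using nd by (simp add: is_dist_def T_def sum_distrib_left[symmetric])
    finally show "\<mu> a' = outcome M \<eta> \<sigma> a'" by simp
  qed
  have "implements A u M \<eta> F \<mu>"
    unfolding eps_implements_def using dgp me vs opt out by blast
  then show ?thesis by blast
qed


lemma eps_mono:
  assumes "eps_implements A u M \<eta> F 0 \<mu>" and "(\<epsilon>::real) \<ge> 0"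
  shows "eps_implements A u M \<eta> F \<epsilon> \<mu>"
proof -
  from assms(1) obtain \<sigma> q where a: "valid_DGP M \<eta>" "maxent_belief M \<eta> F q" "valid_strategy A M \<sigma>"
    "eps_optimal A u M q \<sigma> 0" "\<forall>a\<in>profiles A. \<mu> a = outcome M \<eta> \<sigma> a"
    by (auto simp: eps_implements_def)
  have "eps_optimal A u M q \<sigma> \<epsilon>"
    using a(4) assms(2) unfolding eps_optimal_def
    by (smt (verit, best))
  then show ?thesis using a unfolding eps_implements_def by blast
qed

theorem proposition1:
  fixes A :: "'n::finite \<Rightarrow> 'a set"
    and u :: "'n \<Rightarrow> ('n \<Rightarrow> 'a) \<Rightarrow> real"
  assumes fin: "\<And>i. finite (A i)"
    and ne: "\<And>i. A i \<noteq> {}"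
  shows "(\<forall>\<mu>. is_dist (profiles A) \<mu> \<longrightarrow> implementable A u \<mu> \<longrightarrow> jointly_coherent A u \<mu>)
       \<and> (\<forall>\<mu>. jointly_coherent A u \<mu> \<longrightarrow>
            (\<forall>\<epsilon>>0. \<exists>M \<eta> F. eps_implements A u M \<eta> F \<epsilon> \<mu>))
       \<and> ((\<forall>i. \<forall>a\<in>profiles A. u i a \<in> \<rat>) \<longrightarrow>
            (\<forall>\<mu>. is_dist (profiles A) \<mu> \<longrightarrow> (implementable A u \<mu> \<longleftrightarrow> jointly_coherent A u \<mu>)))"
proof -
  have P1: "\<forall>\<mu>. is_dist (profiles A) \<mu> \<longrightarrow> implementable A u \<mu> \<longrightarrow> jointly_coherent A u \<mu>"
    using part1[OF fin] by (auto simp: implementable_def)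
  have C: "\<exists>M \<eta> F. implements A u M \<eta> F \<mu>" if jc: "jointly_coherent A u \<mu>" for \<mu>
  proof -
    obtain p where p: "correlated_eq A u p" "\<forall>a. \<mu> a \<noteq> 0 \<longrightarrow> p a > 0"
      using ce_combine[OF fin jc] by blast
    have mu: "is_dist (profiles A) \<mu>" using jc by (simp add: jointly_coherent_def)
    show ?thesis by (rule construct[OF fin p(1) mu p(2)])
  qed
  have P2: "\<forall>\<mu>. jointly_coherent A u \<mu> \<longrightarrow> (\<forall>\<epsilon>>0. \<exists>M \<eta> F. eps_implements A u M \<eta> F \<epsilon> \<mu>)"
    using C eps_mono by (meson less_imp_le)
  have P3: "\<forall>\<mu>. is_dist (profiles A) \<mu> \<longrightarrow> (implementable A u \<mu> \<longleftrightarrow> jointly_coherent A u \<mu>)"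
    using P1 C by (auto simp: implementable_def)
  show ?thesis using P1 P2 P3 by blast
qed

end
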